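(* Let $n>2$ and $q>0$ be integers such that $n$ is even or $q$ is odd, and let $p>\max\{n,(q-1)n+1\}$ be a prime. Then $$ \sum_{k=0}^{p-q}\frac{(q-\frac{p}{n})_k^n}{(1)_k^n}\left(\sum_{i=0}^{k-1}\frac{1}{q+i-\frac{p}{n}}-H_k^{(1)}\right)\equiv0\pmod{p^2} $$ and $$ \sum_{k=0}^{p-q}\frac{(q-\frac{p}{n})_k^n}{(1)_k^n}\left(\sum_{i=0}^{k-1}\frac{1}{q+i-\frac{p}{n}}-H_k^{(1)}\right)^2\equiv0\pmod{p}. $$
   Context: $(x)_k$ denotes the Pochhammer symbol: $(x)_0=1$ and $(x)_k=x(x+1)\cdots(x+k-1)$ for $k>0$. $H_k^{(1)}=\sum_{j=1}^k 1/j$ is the $k$th harmonic number (with $H_0^{(1)}=0$); empty sums are $0$. A congruence between rational numbers modulo $p^m$ means their difference lies in $p^m\mathbb{Z}_{(p)}$, where $\mathbb{Z}_{(p)}$ is the ring of rationals whose denominators are coprime to $p$. *)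

theory Defs
  imports Complex_Main "HOL-Computational_Algebra.Primes"
begin

definition Zp_loc :: "nat \<Rightarrow> rat set" where
  "Zp_loc p = {x. \<exists>a b. b \<noteq> 0 \<and> \<not> (int p dvd b) \<and> x = of_int a / of_int b}"

definition rat_cong :: "rat \<Rightarrow> rat \<Rightarrow> nat \<Rightarrow> nat \<Rightarrow> bool" where
  "rat_cong x y p m \<longleftrightarrow> (\<exists>z \<in> Zp_loc p. x - y = of_nat p ^ m * z)"

definition harm :: "nat \<Rightarrow> rat" where
  "harm k = (\<Sum>j=1..k. 1 / of_nat j)"

end

theory Submission
  imports Defs "HOL-Computational_Algebra.Polynomial"
begin

definition pd :: "nat \<Rightarrow> nat \<Rightarrow> rat \<Rightarrow> bool" where
  "pd p e x \<longleftrightarrow> (\<exists>z \<in> Zp_loc p. x = of_nat p ^ e * z)"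

lemma Zp_int: "prime p \<Longrightarrow> of_int a \<in> Zp_loc p"
  unfolding Zp_loc_def
  by (rule CollectI, rule exI[of _ a], rule exI[of _ 1]) (auto simp: prime_gt_1_nat)

lemma Zp_nat: "prime p \<Longrightarrow> of_nat a \<in> Zp_loc p"
  using Zp_int[of p "int a"] by simp

lemma Zp_add:
  assumes "prime p" "x \<in> Zp_loc p" "y \<in> Zp_loc p"
  shows "x + y \<in> Zp_loc p" "x * y \<in> Zp_loc p" "x - y \<in> Zp_loc p" "- x \<in> Zp_loc p"
proof -
  have pp: "prime (int p)" using assms(1) by simp
  obtain a b where ab: "b \<noteq> 0" "\<not> int p dvd b" "x = of_int a / of_int b"
    using assms(2) unfolding Zp_loc_def by auto
  obtain c d where cd: "d \<noteq> 0" "\<not> int p dvd d" "y = of_int c / of_int d"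
    using assms(3) unfolding Zp_loc_def by auto
  have nd: "\<not> int p dvd b * d" using ab cd pp by (simp add: prime_dvd_mult_iff)
  have bd: "b * d \<noteq> 0" using ab cd by simp
  have "x + y = of_int (a * d + c * b) / of_int (b * d)" using ab(1) cd(1) unfolding ab(3) cd(3) by (simp add: field_simps)
  then show "x + y \<in> Zp_loc p" unfolding Zp_loc_def using nd bd by blast
  have "x - y = of_int (a * d - c * b) / of_int (b * d)" using ab(1) cd(1) unfolding ab(3) cd(3) by (simp add: field_simps)
  then show "x - y \<in> Zp_loc p" unfolding Zp_loc_def using nd bd by blast
  have "x * y = of_int (a * c) / of_int (b * d)" using ab(1) cd(1) unfolding ab(3) cd(3) by (simp add: field_simps)
  then show "x * y \<in> Zp_loc p" unfolding Zp_loc_def using nd bd by blast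
  have "- x = of_int (- a) / of_int b" using ab by simp
  then show "- x \<in> Zp_loc p" unfolding Zp_loc_def using ab by blast
qed

lemma Zp_inv_int:
  assumes "prime p" "\<not> int p dvd b"
  shows "1 / of_int b \<in> Zp_loc p"
proof -
  have "b \<noteq> 0" using assms by auto
  then show ?thesis unfolding Zp_loc_def using assms by (intro CollectI exI[of _ 1] exI[of _ b]) auto
qed

lemma Zp_sum: "prime p \<Longrightarrow> (\<And>i. i \<in> A \<Longrightarrow> f i \<in> Zp_loc p) \<Longrightarrow> sum f A \<in> Zp_loc p"
  by (induction A rule: infinite_finite_induct) (auto simp: Zp_int[of p 0, simplified] Zp_add)

lemma Zp_prod: "prime p \<Longrightarrow> (\<And>i. i \<in> A \<Longrightarrow> f i \<in> Zp_loc p) \<Longrightarrow> prod f A \<in> Zp_loc p"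
  by (induction A rule: infinite_finite_induct) (auto simp: Zp_int[of p 1, simplified] Zp_add)

lemma Zp_power: "prime p \<Longrightarrow> x \<in> Zp_loc p \<Longrightarrow> x ^ k \<in> Zp_loc p"
  by (induction k) (auto simp: Zp_int[of p 1, simplified] Zp_add)

lemma pd0: "pd p 0 x \<longleftrightarrow> x \<in> Zp_loc p"
  unfolding pd_def by auto

lemma pd_Z: "prime p \<Longrightarrow> pd p e x \<Longrightarrow> x \<in> Zp_loc p"
  unfolding pd_def using Zp_add(2) Zp_power Zp_nat by metis

lemma pd_add: "prime p \<Longrightarrow> pd p e x \<Longrightarrow> pd p e y \<Longrightarrow> pd p e (x + y)"
  unfolding pd_def by (metis Zp_add(1) distrib_left)

lemma pd_diff: "prime p \<Longrightarrow> pd p e x \<Longrightarrow> pd p e y \<Longrightarrow> pd p e (x - y)"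
  unfolding pd_def by (metis Zp_add(3) right_diff_distrib)

lemma pd_zero: "prime p \<Longrightarrow> pd p e 0"
  unfolding pd_def using Zp_int[of p 0] by force

lemma pd_sum: "prime p \<Longrightarrow> (\<And>i. i \<in> A \<Longrightarrow> pd p e (f i)) \<Longrightarrow> pd p e (sum f A)"
  by (induction A rule: infinite_finite_induct) (auto simp: pd_zero pd_add)

lemma pd_mult: "prime p \<Longrightarrow> pd p e x \<Longrightarrow> pd p f y \<Longrightarrow> pd p (e + f) (x * y)"
  unfolding pd_def
  by (metis (no_types, lifting) Zp_add(2) mult.assoc mult.left_commute power_add)

lemma pd_multZ: "prime p \<Longrightarrow> pd p e x \<Longrightarrow> y \<in> Zp_loc p \<Longrightarrow> pd p e (x * y)"
  using pd_mult[of p e x 0 y] by (simp add: pd0)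

lemma pd_multZ': "prime p \<Longrightarrow> pd p e x \<Longrightarrow> y \<in> Zp_loc p \<Longrightarrow> pd p e (y * x)"
  using pd_multZ by (metis mult.commute)

lemma pd_mono: "prime p \<Longrightarrow> pd p e x \<Longrightarrow> e' \<le> e \<Longrightarrow> pd p e' x"
proof -
  assume a: "prime p" "pd p e x" "e' \<le> e"
  then obtain z where z: "z \<in> Zp_loc p" "x = of_nat p ^ e * z" unfolding pd_def by auto
  have "x = of_nat p ^ e' * (of_nat p ^ (e - e') * z)"
    using z a(3) by (simp add: power_add[symmetric] mult.assoc[symmetric])
  then show ?thesis unfolding pd_def using z a(1) Zp_add(2) Zp_power Zp_nat by blast
qed

lemma pd_p: "prime p \<Longrightarrow> pd p 1 (of_nat p)"
  unfolding pd_def using Zp_int[of p 1] by force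

lemma pd_cancel:
  assumes "prime p" "pd p e (of_int c * x)" "\<not> int p dvd c"
  shows "pd p e x"
proof -
  have "c \<noteq> 0" using assms by auto
  then have "x = (of_int c * x) * (1 / of_int c)" by simp
  then show ?thesis using pd_multZ[OF assms(1,2) Zp_inv_int[OF assms(1,3)]] by simp
qed

definition cg :: "nat \<Rightarrow> nat \<Rightarrow> rat \<Rightarrow> rat \<Rightarrow> bool" where
  "cg p e x y \<longleftrightarrow> pd p e (x - y)"

lemma cg_refl: "prime p \<Longrightarrow> cg p e x x"
  unfolding cg_def using pd_zero by simp

lemma cg_sym: "prime p \<Longrightarrow> cg p e x y \<Longrightarrow> cg p e y x"
  unfolding cg_def using pd_diff[of p e 0 "x - y"] pd_zero by simp

lemma cg_trans: "prime p \<Longrightarrow> cg p e x y \<Longrightarrow> cg p e y z \<Longrightarrow> cg p e x z"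
  unfolding cg_def using pd_add[of p e "x - y" "y - z"] by simp

lemma cg_add: "prime p \<Longrightarrow> cg p e x x' \<Longrightarrow> cg p e y y' \<Longrightarrow> cg p e (x + y) (x' + y')"
  unfolding cg_def using pd_add[of p e "x - x'" "y - y'"] by (simp add: algebra_simps)

lemma cg_diff: "prime p \<Longrightarrow> cg p e x x' \<Longrightarrow> cg p e y y' \<Longrightarrow> cg p e (x - y) (x' - y')"
  unfolding cg_def using pd_diff[of p e "x - x'" "y - y'"] by (simp add: algebra_simps)

lemma cg_mult: "prime p \<Longrightarrow> cg p e x x' \<Longrightarrow> cg p e y y' \<Longrightarrow> x \<in> Zp_loc p \<Longrightarrow> y' \<in> Zp_loc p
   \<Longrightarrow> cg p e (x * y) (x' * y')"
proof -
  assume a: "prime p" "cg p e x x'" "cg p e y y'" "x \<in> Zp_loc p" "y' \<in> Zp_loc p"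
  have "x * y - x' * y' = x * (y - y') + (x - x') * y'" by (simp add: algebra_simps)
  moreover have "pd p e (x * (y - y'))" using pd_multZ'[OF a(1) _ a(4)] a(3) unfolding cg_def by blast
  moreover have "pd p e ((x - x') * y')" using pd_multZ[OF a(1) _ a(5)] a(2) unfolding cg_def by blast
  ultimately show ?thesis unfolding cg_def using pd_add a(1) by metis
qed

lemma cg_Z: "prime p \<Longrightarrow> cg p e x y \<Longrightarrow> y \<in> Zp_loc p \<Longrightarrow> x \<in> Zp_loc p"
  unfolding cg_def using pd_Z Zp_add(1) by (metis diff_add_cancel)

lemma cg_prod:
  assumes p: "prime p"
  shows "(\<And>i. i \<in> A \<Longrightarrow> cg p e (f i) (g i)) \<Longrightarrow> (\<And>i. i \<in> A \<Longrightarrow> g i \<in> Zp_loc p)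
  \<Longrightarrow> cg p e (prod f A) (prod g A)"
proof (induction A rule: infinite_finite_induct)
  case (infinite A) then show ?case by (simp add: cg_refl p)
next
  case empty then show ?case by (simp add: cg_refl p)
next
  case (insert x F)
  have c1: "cg p e (f x) (g x)" using insert.prems(1) by simp
  have g1: "g x \<in> Zp_loc p" using insert.prems(2) by simp
  have fx: "f x \<in> Zp_loc p" using cg_Z[OF p c1 g1] .
  have gF: "prod g F \<in> Zp_loc p" by (rule Zp_prod[OF p]) (simp add: insert.prems(2))
  have "cg p e (prod f F) (prod g F)" using insert.IH insert.prems by simp
  then have "cg p e (f x * prod f F) (g x * prod g F)" using cg_mult[OF p c1 _ fx gF] by simp
  then show ?case using insert.hyps by simp
qed

lemma cg_power: "prime p \<Longrightarrow> cg p e x y \<Longrightarrow> y \<in> Zp_loc p \<Longrightarrow> cg p e (x ^ k) (y ^ k)"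
  using cg_prod[of p "{..<k}" e "\<lambda>_. x" "\<lambda>_. y"] by simp

lemma cg_sum: "prime p \<Longrightarrow> (\<And>i. i \<in> A \<Longrightarrow> cg p e (f i) (g i)) \<Longrightarrow> cg p e (sum f A) (sum g A)"
  unfolding cg_def using pd_sum[of p A e "\<lambda>i. f i - g i"] by (simp add: sum_subtractf)

lemma cg_mono: "prime p \<Longrightarrow> cg p e x y \<Longrightarrow> e' \<le> e \<Longrightarrow> cg p e' x y"
  unfolding cg_def using pd_mono by blast

lemma cg_inv: "prime p \<Longrightarrow> cg p e x y \<Longrightarrow> 1 / x \<in> Zp_loc p \<Longrightarrow> 1 / y \<in> Zp_loc p \<Longrightarrow> x \<noteq> 0 \<Longrightarrow> y \<noteq> 0
  \<Longrightarrow> cg p e (1 / x) (1 / y)"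
proof -
  assume a: "prime p" "cg p e x y" "1 / x \<in> Zp_loc p" "1 / y \<in> Zp_loc p" "x \<noteq> 0" "y \<noteq> 0"
  have "1 / x - 1 / y = (y - x) * ((1 / x) * (1 / y))" using a(5,6) by (simp add: field_simps)
  moreover have "pd p e (y - x)" using cg_sym[OF a(1,2)] unfolding cg_def .
  ultimately show ?thesis unfolding cg_def using pd_multZ[OF a(1)] Zp_add(2)[OF a(1,3,4)] by metis
qed

lemma alt_binom_shift:
  fixes f :: "nat \<Rightarrow> rat"
  shows "(\<Sum>k\<le>Suc m. (-1)^k * of_nat (Suc m choose k) * f k)
       = - (\<Sum>k\<le>m. (-1)^k * of_nat (m choose k) * (f (Suc k) - f k))"
proof -
  have "(\<Sum>k\<le>Suc m. (-1)^k * of_nat (Suc m choose k) * f k)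
     = (\<Sum>k\<le>Suc m. (-1)^k * of_nat (m choose k) * f k)
       + (\<Sum>k\<le>Suc m. (if k = 0 then 0 else (-1)^k * of_nat (m choose (k - 1)) * f k))"
    apply (subst sum.distrib[symmetric], rule sum.cong, simp)
    subgoal for x by (cases x) (auto simp: algebra_simps)
    done
  also have "(\<Sum>k\<le>Suc m. (-1)^k * of_nat (m choose k) * f k) = (\<Sum>k\<le>m. (-1)^k * of_nat (m choose k) * f k)"
    by simp
  also have "(\<Sum>k\<le>Suc m. (if k = 0 then 0 else (-1)^k * of_nat (m choose (k - 1)) * f k))
     = (\<Sum>k\<le>m. (-1)^(Suc k) * of_nat (m choose k) * f (Suc k))"
    by (subst sum.atMost_Suc_shift) simp
  finally show ?thesis by (simp add: sum_negf[symmetric] sum.distrib[symmetric] algebra_simps)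
qed

lemma alt_binom_monomial:
  "j < m \<Longrightarrow> (\<Sum>k\<le>m. (-1)^k * of_nat (m choose k) * (of_nat k :: rat) ^ j) = 0"
proof (induction m arbitrary: j)
  case 0 then show ?case by simp
next
  case (Suc m)
  have "(\<Sum>k\<le>Suc m. (-1)^k * of_nat (Suc m choose k) * (of_nat k :: rat) ^ j)
      = - (\<Sum>k\<le>m. (-1)^k * of_nat (m choose k) * ((of_nat (Suc k) :: rat) ^ j - of_nat k ^ j))"
    by (rule alt_binom_shift)
  also have "\<dots> = - (\<Sum>k\<le>m. (-1)^k * of_nat (m choose k) * (\<Sum>i<j. of_nat (j choose i) * (of_nat k :: rat) ^ i))"
  proof -
    have "(of_nat (Suc k) :: rat) ^ j - of_nat k ^ j = (\<Sum>i<j. of_nat (j choose i) * (of_nat k :: rat) ^ i)" for k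
    proof -
      have "(of_nat k + 1 :: rat) ^ j = (\<Sum>i\<le>j. of_nat (j choose i) * of_nat k ^ i)"
        by (subst binomial_ring) (simp add: mult.commute)
      also have "\<dots> = (\<Sum>i<j. of_nat (j choose i) * (of_nat k :: rat) ^ i) + of_nat k ^ j"
        by (simp add: lessThan_Suc_atMost[symmetric])
      finally show ?thesis by (simp add: add.commute)
    qed
    then show ?thesis by simp
  qed
  also have "\<dots> = - (\<Sum>i<j. of_nat (j choose i) * (\<Sum>k\<le>m. (-1)^k * of_nat (m choose k) * (of_nat k :: rat) ^ i))"
    by (simp add: sum_distrib_left sum_distrib_right mult_ac sum.swap[of _ "{..m}"])
  also have "(\<Sum>i<j. of_nat (j choose i) * (\<Sum>k\<le>m. (-1)^k * of_nat (m choose k) * (of_nat k :: rat) ^ i)) = 0"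
    using Suc by (intro sum.neutral ballI) auto
  finally show ?case by simp
qed

definition isP :: "nat \<Rightarrow> (nat \<Rightarrow> rat) \<Rightarrow> bool" where
  "isP d f \<longleftrightarrow> (\<exists>P. degree P \<le> d \<and> (\<forall>k. f k = poly P (of_nat k)))"

lemma alt_binom_poly:
  assumes "isP d f" "d < m"
  shows "(\<Sum>k\<le>m. (-1)^k * of_nat (m choose k) * f k) = 0"
proof -
  obtain P where P: "degree P \<le> d" "\<And>k. f k = poly P (of_nat k)" using assms(1) unfolding isP_def by auto
  have "(\<Sum>k\<le>m. (-1)^k * of_nat (m choose k) * f k)
     = (\<Sum>k\<le>m. (-1)^k * of_nat (m choose k) * (\<Sum>i\<le>degree P. coeff P i * (of_nat k :: rat) ^ i))"
    by (simp add: P(2) poly_altdef)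
  also have "\<dots> = (\<Sum>i\<le>degree P. coeff P i * (\<Sum>k\<le>m. (-1)^k * of_nat (m choose k) * (of_nat k :: rat) ^ i))"
    by (simp add: sum_distrib_left sum_distrib_right mult_ac sum.swap[of _ "{..m}"])
  also have "\<dots> = 0"
    using P(1) assms(2) by (intro sum.neutral ballI) (simp add: alt_binom_monomial)
  finally show ?thesis .
qed

lemma isP_const: "isP 0 (\<lambda>k. c)"
  unfolding isP_def by (rule exI[of _ "[:c:]"]) simp

lemma isP_mono: "isP d f \<Longrightarrow> d \<le> d' \<Longrightarrow> isP d' f"
  unfolding isP_def by (auto intro: order.trans)

lemma isP_add: "isP d f \<Longrightarrow> isP d g \<Longrightarrow> isP d (\<lambda>k. f k + g k)"
  unfolding isP_def
  apply clarify
  subgoal for P Q by (rule exI[of _ "P + Q"]) (auto intro: order.trans[OF degree_add_le])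
  done

lemma isP_diff: "isP d f \<Longrightarrow> isP d g \<Longrightarrow> isP d (\<lambda>k. f k - g k)"
  unfolding isP_def
  apply clarify
  subgoal for P Q by (rule exI[of _ "P - Q"]) (auto intro: order.trans[OF degree_diff_le])
  done

lemma isP_mult: "isP d f \<Longrightarrow> isP e g \<Longrightarrow> isP (d + e) (\<lambda>k. f k * g k)"
  unfolding isP_def
  apply clarify
  subgoal for P Q by (rule exI[of _ "P * Q"]) (auto intro: order.trans[OF degree_mult_le])
  done

lemma isP_power: "isP d f \<Longrightarrow> isP (d * j) (\<lambda>k. f k ^ j)"
proof (induction j)
  case 0 then show ?case using isP_const[of 1] by simp
next
  case (Suc j)
  then show ?case using isP_mult[OF Suc.prems Suc.IH[OF Suc.prems]] by (simp add: add.commute)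
qed

lemma isP_sum: "(\<And>i. i \<in> A \<Longrightarrow> isP d (f i)) \<Longrightarrow> isP d (\<lambda>k. \<Sum>i\<in>A. f i k)"
proof (induction A rule: infinite_finite_induct)
  case (infinite A) then show ?case using isP_mono[OF isP_const[of 0]] by simp
next
  case empty then show ?case using isP_mono[OF isP_const[of 0]] by simp
next
  case (insert x F)
  then show ?case using isP_add[of d "f x" "\<lambda>k. \<Sum>i\<in>F. f i k"] by simp
qed

lemma isP_prod_lin: "isP (card A) (\<lambda>k. \<Prod>j\<in>A. (of_nat k + c j))"
proof (induction A rule: infinite_finite_induct)
  case (infinite A) then show ?case using isP_mono[OF isP_const[of 1]] by simp
next
  case empty then show ?case using isP_const[of 1] by simp
next
  case (insert x F)
  have l: "isP 1 (\<lambda>k. of_nat k + c x)"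
    unfolding isP_def by (rule exI[of _ "[:c x, 1:]"]) simp
  show ?case using isP_mult[OF l insert.IH] insert.hyps by simp
qed

lemma inv_exp:
  fixes a t :: rat
  assumes "a \<noteq> 0" "a - t \<noteq> 0"
  shows "1 / (a - t) - 1 / a - t * (1 / a ^ 2) = t ^ 2 * ((1 / a) ^ 2 * (1 / (a - t)))"
proof -
  have "(1 / (a - t) - 1 / a - t * (1 / a ^ 2)) * (a ^ 2 * (a - t)) = t ^ 2"
    using assms by (simp add: field_simps power2_eq_square)
  moreover have "(t ^ 2 * ((1 / a) ^ 2 * (1 / (a - t)))) * (a ^ 2 * (a - t)) = t ^ 2"
    using assms by (simp add: field_simps power2_eq_square)
  ultimately show ?thesis using assms by (metis mult_right_cancel mult_eq_0_iff power_eq_0_iff)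
qed

lemma pow_div_split: "((a::rat) / f) ^ j = a ^ j * (1 / f) ^ j"
  by (simp add: power_divide power_one_over)

lemma divsplit2: "((a::rat) / f) * (c / f)^j = a * c^j * ((1/f) * (1/f)^j)"
  by (simp add: power_divide power_one_over)

locale L =
  fixes n q p :: nat
  assumes n2: "n > 2" and q0: "q > 0" and par: "even n \<or> odd q"
    and pr: "prime p" and pbig: "p > max n ((q - 1) * n + 1)"
begin

definition m :: nat where "m = p - q"
definition t :: rat where "t = of_nat p / of_nat n"

lemma pn: "p > n" using pbig by simp
lemma pq1: "p > (q - 1) * n + 1" using pbig by simp
lemma qp: "q < p"
proof -
  have "(q - 1) * 1 \<le> (q - 1) * n" using n2 by (intro mult_le_mono2) auto
  then show ?thesis using pq1 q0 by linarith
qed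
lemma pm: "p = q + m" using qp unfolding m_def by simp
lemma deg: "(q - 1) * (n - 1) < m"
proof -
  have "(q - 1) * (n - 1) + (q - 1) = (q - 1) * (n - 1 + 1)" by (simp add: distrib_left)
  also have "n - 1 + 1 = n" using n2 by simp
  finally have "(q - 1) * (n - 1) + (q - 1) = (q - 1) * n" .
  then show ?thesis using pq1 q0 unfolding m_def by linarith
qed
lemma p_odd: "odd p"
  using pr pn n2 prime_odd_nat[of p] by auto
lemma mn_even: "even (m * n)"
proof (cases "even n")
  case False
  then have "odd q" using par by simp
  then have "even m" using p_odd pm by (metis even_add)
  then show ?thesis by simp
qed simp

lemma Zint: "of_int a \<in> Zp_loc p" using Zp_int[OF pr] .
lemma Znat: "of_nat a \<in> Zp_loc p" using Zp_nat[OF pr] .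

lemma Zinv_nat: "0 < a \<Longrightarrow> a < p \<Longrightarrow> 1 / (of_nat a :: rat) \<in> Zp_loc p"
proof -
  assume a: "0 < a" "a < p"
  have "\<not> int p dvd int a" using a by (auto dest: dvd_imp_le)
  then show ?thesis using Zp_inv_int[OF pr, of "int a"] by simp
qed

lemma Zinv_fact: "k < p \<Longrightarrow> 1 / (fact k :: rat) \<in> Zp_loc p"
proof -
  assume a: "k < p"
  have "\<not> p dvd fact k" using prime_dvd_fact_iff[OF pr] a by simp
  then have "\<not> int p dvd int (fact k)" by (simp only: int_dvd_int_iff not_False_eq_True)
  then have "1 / (of_int (int (fact k)) :: rat) \<in> Zp_loc p" using Zp_inv_int[OF pr] by blast
  moreover have "(of_int (int (fact k)) :: rat) = fact k" by (metis of_int_of_nat_eq of_nat_fact)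
  ultimately show ?thesis by simp
qed

lemma pd_t: "pd p 1 t"
proof -
  have "1 / (of_nat n :: rat) \<in> Zp_loc p" using Zinv_nat n2 pn by simp
  moreover have "t = of_nat p * (1 / of_nat n)" unfolding t_def by simp
  ultimately show ?thesis unfolding pd_def by (intro bexI[of _ "1 / of_nat n"]) simp_all
qed

lemma Zt: "t \<in> Zp_loc p" using pd_Z[OF pr pd_t] .

lemma Zinv_qi: "i < m \<Longrightarrow> 1 / (of_nat q + of_nat i :: rat) \<in> Zp_loc p"
  using Zinv_nat[of "q + i"] q0 pm by simp

lemma shifted_ne: "i < m \<Longrightarrow> \<not> int p dvd int n * int (q + i) - int p"
proof
  assume i: "i < m" and d: "int p dvd int n * int (q + i) - int p"
  then have "int p dvd int n * int (q + i)" by (metis dvd_diff_commute dvd_refl dvd_trans zdvd_zdiffD)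
  then have "p dvd n * (q + i)" by (metis of_nat_mult int_dvd_int_iff)
  then have "p dvd n \<or> p dvd (q + i)" using pr prime_dvd_mult_iff by blast
  then show False using pn n2 i pm q0 by (auto dest: dvd_imp_le)
qed

lemma qit_eq: "(of_nat q + of_nat i - t :: rat) = of_int (int n * int (q + i) - int p) / of_nat n"
  unfolding t_def using n2 by (simp add: field_simps)

lemma qit_ne: "i < m \<Longrightarrow> (of_nat q + of_nat i - t :: rat) \<noteq> 0"
proof
  assume i: "i < m" and z: "of_nat q + of_nat i - t = 0"
  then have "(of_int (int n * int (q + i) - int p) :: rat) = 0" using qit_eq[of i] n2 by simp
  then have "int n * int (q + i) - int p = 0" by linarith
  then show False using shifted_ne[OF i] by simp
qed

lemma Zinv_qit: "i < m \<Longrightarrow> 1 / (of_nat q + of_nat i - t :: rat) \<in> Zp_loc p"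
proof -
  assume i: "i < m"
  have "1 / (of_nat q + of_nat i - t :: rat) = of_nat n * (1 / of_int (int n * int (q + i) - int p))"
    using qit_eq[of i] n2 by simp
  then show ?thesis using Zp_add(2)[OF pr Znat Zp_inv_int[OF pr shifted_ne[OF i]]] by simp
qed

lemma Zharm: "k < p \<Longrightarrow> harm k \<in> Zp_loc p"
  unfolding harm_def by (rule Zp_sum[OF pr]) (use Zinv_nat in auto)


definition b :: "nat \<Rightarrow> rat" where "b k = (-1)^k * of_nat (m choose k)"
definition Cf :: "nat \<Rightarrow> rat" where "Cf k = pochhammer (of_nat q) k / fact k"
definition A :: "nat \<Rightarrow> rat" where
  "A k = pochhammer (of_nat q - of_nat p / of_nat n) k ^ n / pochhammer 1 k ^ n"
definition be :: "nat \<Rightarrow> rat" where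
  "be k = (\<Sum>i<k. 1 / (of_nat q + of_nat i - of_nat p / of_nat n)) - harm k"
definition be0 :: "nat \<Rightarrow> rat" where
  "be0 k = (\<Sum>i<k. 1 / (of_nat q + of_nat i)) - harm k"
definition gam :: "nat \<Rightarrow> rat" where
  "gam k = (\<Sum>i<k. 1 / (of_nat q + of_nat i) ^ 2)"
definition X :: "nat \<Rightarrow> rat" where "X k = b k * Cf k ^ (n - 1)"

lemma b_poch: "b k = pochhammer (of_nat q - of_nat p) k / fact k"
proof -
  have "(of_nat (m choose k) :: rat) = (-1)^k * pochhammer (- of_nat m) k / fact k"
    by (simp add: binomial_gbinomial gbinomial_pochhammer)
  moreover have "(- of_nat m :: rat) = of_nat q - of_nat p" using pm by simp
  ultimately have "b k = ((-1)^k * (-1)^k) * pochhammer (of_nat q - of_nat p) k / fact k"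
    unfolding b_def by simp
  also have "(-1::rat)^k * (-1)^k = 1" by (simp add: power_mult_distrib[symmetric])
  finally show ?thesis by simp
qed

lemma Zb: "b k \<in> Zp_loc p"
  unfolding b_def using Zp_add(2)[OF pr Zp_power[OF pr Zint[of "-1"]] Znat] by simp

lemma ZCf: "k < p \<Longrightarrow> Cf k \<in> Zp_loc p"
proof -
  assume k: "k < p"
  have "Cf k = of_nat (pochhammer q k) * (1 / fact k)" unfolding Cf_def by (simp add: pochhammer_of_nat)
  then show ?thesis using Zp_add(2)[OF pr Znat Zinv_fact[OF k]] by simp
qed

lemma Cf_b: "k \<le> m \<Longrightarrow> cg p 1 (Cf k) (b k)"
proof -
  assume k: "k \<le> m"
  have kp: "k < p" using k pm q0 by simp
  have c1: "cg p 1 (\<Prod>i\<in>{0..<k}. of_nat q + of_nat i) (\<Prod>i\<in>{0..<k}. (of_nat q - of_nat p) + of_nat i)"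
  proof (rule cg_prod[OF pr])
    fix i show "cg p 1 (of_nat q + of_nat i) (of_nat q - of_nat p + of_nat i :: rat)"
      unfolding cg_def using pd_p[OF pr] by simp
  next
    fix i show "(of_nat q - of_nat p + of_nat i :: rat) \<in> Zp_loc p"
      using Zp_add[OF pr Znat Znat] Zp_add(1)[OF pr _ Znat] by blast
  qed
  have "Cf k = (\<Prod>i\<in>{0..<k}. of_nat q + of_nat i) * (1 / fact k)"
    unfolding Cf_def pochhammer_prod by simp
  moreover have "b k = (\<Prod>i\<in>{0..<k}. (of_nat q - of_nat p) + of_nat i) * (1 / fact k)"
    unfolding b_poch pochhammer_prod by simp
  moreover have "(\<Prod>i\<in>{0..<k}. of_nat q + of_nat i :: rat) \<in> Zp_loc p"
    by (rule Zp_prod[OF pr]) (use Zp_add(1)[OF pr Znat Znat] in blast)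
  ultimately show ?thesis
    using cg_mult[OF pr c1 cg_refl[OF pr] _ Zinv_fact[OF kp]] by simp
qed

lemma pow_exp:
  assumes "x \<in> Zp_loc p" "s \<in> Zp_loc p"
  shows "\<exists>w\<in>Zp_loc p. (x - s) ^ N = x ^ N - of_nat N * s * x ^ (N - 1) + s ^ 2 * w"
proof (induction N)
  case 0 then show ?case using Zint[of 0] by (intro bexI[of _ 0]) simp_all
next
  case (Suc N)
  then obtain w where w: "w \<in> Zp_loc p" "(x - s) ^ N = x ^ N - of_nat N * s * x ^ (N - 1) + s ^ 2 * w"
    by blast
  define w' where "w' = x * w + of_nat N * x ^ (N - 1) - s * w"
  have "w' \<in> Zp_loc p" unfolding w'_def using assms w(1)
    by (intro Zp_add[OF pr] Zp_power[OF pr] Znat) auto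
  moreover have "(x - s) ^ Suc N = x ^ Suc N - of_nat (Suc N) * s * x ^ (Suc N - 1) + s ^ 2 * w'"
  proof (cases N)
    case 0
    have z: "s ^ 2 * w = 0" using w(2) 0 by simp
    have "s ^ 2 * w' = x * (s ^ 2 * w) - s * (s ^ 2 * w)" unfolding w'_def using 0 by (simp add: algebra_simps)
    then have "s ^ 2 * w' = 0" using z by simp
    then show ?thesis using 0 by simp
  next
    case (Suc N')
    have e: "(x - s) ^ Suc N = (x - s) * (x ^ N - of_nat N * s * x ^ (N - 1) + s ^ 2 * w)"
      using w(2) by (simp only: power_Suc)
    show ?thesis unfolding e unfolding w'_def Suc by (simp add: algebra_simps power2_eq_square)
  qed
  ultimately show ?case by blast
qed

lemma nt: "of_nat n * t = of_nat p"
  unfolding t_def using n2 by simp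

lemma pd_t2: "pd p 2 (t ^ 2)"
proof -
  have "pd p (1 + 1) (t * t)" by (rule pd_mult[OF pr pd_t pd_t])
  then show ?thesis by (metis one_add_one power2_eq_square)
qed

lemma pow_cg: "x \<in> Zp_loc p \<Longrightarrow> cg p 2 ((x - t) ^ n) ((x - of_nat p) * x ^ (n - 1))"
proof -
  assume x: "x \<in> Zp_loc p"
  obtain w where w: "w \<in> Zp_loc p" "(x - t) ^ n = x ^ n - of_nat n * t * x ^ (n - 1) + t ^ 2 * w"
    using pow_exp[OF x Zt] by blast
  have "x * x ^ (n - 1) = x ^ n" using n2 by (cases n) auto
  then have "(x - t) ^ n - (x - of_nat p) * x ^ (n - 1) = t ^ 2 * w"
    using w(2) nt by (simp add: algebra_simps)
  then show ?thesis unfolding cg_def using pd_multZ[OF pr pd_t2 w(1)] by simp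
qed

lemma A_X: "k \<le> m \<Longrightarrow> cg p 2 (A k) (X k)"
proof -
  assume k: "k \<le> m"
  have kp: "k < p" using k pm q0 by simp
  have fn: "(1 / fact k :: rat) * (1 / fact k) ^ (n - 1) = (1 / fact k) ^ n"
    using n2 by (cases n) auto
  have "A k = pochhammer (of_nat q - t) k ^ n / fact k ^ n"
    unfolding A_def t_def pochhammer_fact by simp
  also have "pochhammer (of_nat q - t) k = (\<Prod>i\<in>{0..<k}. (of_nat q + of_nat i - t))"
    unfolding pochhammer_prod by (simp add: algebra_simps)
  finally have eA: "A k = (\<Prod>i\<in>{0..<k}. (of_nat q + of_nat i - t) ^ n) * (1 / fact k) ^ n"
    by (simp add: prod_power_distrib power_one_over)
  have eX: "X k = (\<Prod>i\<in>{0..<k}. (of_nat q + of_nat i - of_nat p) * (of_nat q + of_nat i) ^ (n - 1)) * (1 / fact k) ^ n"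
  proof -
    have "X k = ((\<Prod>i\<in>{0..<k}. of_nat q - of_nat p + of_nat i) / fact k) *
               ((\<Prod>i\<in>{0..<k}. of_nat q + of_nat i) / fact k) ^ (n - 1)"
      unfolding X_def b_poch Cf_def pochhammer_prod ..
    also have "\<dots> = (\<Prod>i\<in>{0..<k}. of_nat q - of_nat p + of_nat i) * (\<Prod>i\<in>{0..<k}. of_nat q + of_nat i) ^ (n - 1)
          * ((1 / fact k) * (1 / fact k) ^ (n - 1))"
      by (rule divsplit2)
    also have "\<dots> = (\<Prod>i\<in>{0..<k}. (of_nat q + of_nat i - of_nat p) * (of_nat q + of_nat i) ^ (n - 1)) * (1 / fact k) ^ n"
      unfolding fn prod.distrib prod_power_distrib diff_add_eq by (simp only: mult.assoc)
    finally show ?thesis .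
  qed
  have c: "cg p 2 (\<Prod>i\<in>{0..<k}. (of_nat q + of_nat i - t) ^ n)
       (\<Prod>i\<in>{0..<k}. (of_nat q + of_nat i - of_nat p) * (of_nat q + of_nat i) ^ (n - 1))"
  proof (rule cg_prod[OF pr])
    fix i
    have "(of_nat q + of_nat i :: rat) \<in> Zp_loc p" using Zp_add(1)[OF pr Znat Znat] .
    then show "cg p 2 ((of_nat q + of_nat i - t) ^ n) ((of_nat q + of_nat i - of_nat p) * (of_nat q + of_nat i) ^ (n - 1))"
      by (rule pow_cg)
    show "(of_nat q + of_nat i - of_nat p) * (of_nat q + of_nat i) ^ (n - 1) \<in> Zp_loc p"
      by (intro Zp_add[OF pr] Zp_power[OF pr] Znat)
  qed
  have z: "(\<Prod>i\<in>{0..<k}. (of_nat q + of_nat i - t) ^ n) \<in> Zp_loc p"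
    by (intro Zp_prod[OF pr] Zp_power[OF pr] Zp_add[OF pr] Znat Zt)
  show ?thesis unfolding eA eX
    by (rule cg_mult[OF pr c cg_refl[OF pr] z Zp_power[OF pr Zinv_fact[OF kp]]])
qed

lemma ZX: "k \<le> m \<Longrightarrow> X k \<in> Zp_loc p"
  unfolding X_def using ZCf[of k] pm q0 by (intro Zp_add(2)[OF pr Zb] Zp_power[OF pr]) simp

lemma ZA: "k \<le> m \<Longrightarrow> A k \<in> Zp_loc p"
  using cg_Z[OF pr A_X ZX] by blast

lemma Zbe0: "k \<le> m \<Longrightarrow> be0 k \<in> Zp_loc p"
  unfolding be0_def using Zharm[of k] pm q0
  by (intro Zp_add[OF pr] Zp_sum[OF pr] Zinv_qi) auto

lemma Zgam: "k \<le> m \<Longrightarrow> gam k \<in> Zp_loc p"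
  unfolding gam_def
  by (intro Zp_sum[OF pr]) (use Zp_power[OF pr Zinv_qi, of _ 2] in \<open>auto simp: power_one_over\<close>)

lemma be_cg: "k \<le> m \<Longrightarrow> cg p 2 (be k) (be0 k + t * gam k)"
proof -
  assume k: "k \<le> m"
  have "be k - (be0 k + t * gam k) =
     (\<Sum>i<k. 1 / (of_nat q + of_nat i - t) - 1 / (of_nat q + of_nat i) - t * (1 / (of_nat q + of_nat i) ^ 2))"
    unfolding be_def be0_def gam_def t_def[symmetric]
    by (simp add: sum_subtractf sum_distrib_left)
  also have "\<dots> = (\<Sum>i<k. t ^ 2 * ((1 / (of_nat q + of_nat i)) ^ 2 * (1 / (of_nat q + of_nat i - t))))"
  proof (rule sum.cong[OF refl])
    fix i assume "i \<in> {..<k}"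
    then have i: "i < m" using k by simp
    have a: "(of_nat q + of_nat i :: rat) \<noteq> 0" using q0 by simp
    have b: "(of_nat q + of_nat i - t :: rat) \<noteq> 0" using qit_ne[OF i] .
    show "1 / (of_nat q + of_nat i - t) - 1 / (of_nat q + of_nat i) - t * (1 / (of_nat q + of_nat i) ^ 2)
        = t ^ 2 * ((1 / (of_nat q + of_nat i)) ^ 2 * (1 / (of_nat q + of_nat i - t :: rat)))"
      using inv_exp[OF a b] .
  qed
  finally have e: "be k - (be0 k + t * gam k) = (\<Sum>i<k. t ^ 2 * ((1 / (of_nat q + of_nat i)) ^ 2 * (1 / (of_nat q + of_nat i - t))))" .
  show ?thesis unfolding cg_def e
  proof (rule pd_sum[OF pr])
    fix i assume "i \<in> {..<k}"
    then have i: "i < m" using k by simp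
    show "pd p 2 (t ^ 2 * ((1 / (of_nat q + of_nat i)) ^ 2 * (1 / (of_nat q + of_nat i - t))))"
      by (intro pd_multZ[OF pr pd_t2] Zp_add(2)[OF pr] Zp_power[OF pr] Zinv_qi Zinv_qit i)
  qed
qed


definition H2 :: "nat \<Rightarrow> rat" where "H2 k = (\<Sum>j=1..k. 1 / of_nat j ^ 2)"

lemma harm_add: "harm (x + y) = harm x + (\<Sum>i<y. 1 / (of_nat x + 1 + of_nat i))"
proof (induction y)
  case 0 then show ?case by simp
next
  case (Suc y)
  have "harm (x + Suc y) = harm (x + y) + 1 / of_nat (Suc (x + y))"
    unfolding harm_def by (simp add: sum.cl_ivl_Suc)
  then show ?case using Suc by (simp add: add_ac)
qed

lemma H2_add: "H2 (x + y) = H2 x + (\<Sum>i<y. 1 / (of_nat x + 1 + of_nat i) ^ 2)"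
proof (induction y)
  case 0 then show ?case by simp
next
  case (Suc y)
  have "H2 (x + Suc y) = H2 (x + y) + 1 / of_nat (Suc (x + y)) ^ 2"
    unfolding H2_def by (simp add: sum.cl_ivl_Suc)
  then show ?case using Suc by (simp add: add_ac)
qed

lemma ofq: "(of_nat (q - 1) + 1 :: rat) = of_nat q"
  using q0 by (simp add: of_nat_diff)

lemma be0_eq: "be0 k = (\<Sum>j<q-1. 1 / (of_nat k + 1 + of_nat j)) - harm (q - 1)"
proof -
  have "harm (q - 1 + k) = harm (q - 1) + (\<Sum>i<k. 1 / (of_nat q + of_nat i))"
    using harm_add[of "q - 1" k] unfolding ofq .
  moreover have "harm (k + (q - 1)) = harm k + (\<Sum>j<q-1. 1 / (of_nat k + 1 + of_nat j))"
    by (rule harm_add)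
  ultimately show ?thesis unfolding be0_def by (simp add: add.commute)
qed

lemma gam_eq: "gam k = H2 k + (\<Sum>j<q-1. 1 / (of_nat k + 1 + of_nat j) ^ 2) - H2 (q - 1)"
proof -
  have "H2 (q - 1 + k) = H2 (q - 1) + gam k"
    using H2_add[of "q - 1" k] unfolding ofq gam_def .
  moreover have "H2 (k + (q - 1)) = H2 k + (\<Sum>j<q-1. 1 / (of_nat k + 1 + of_nat j) ^ 2)"
    by (rule H2_add)
  ultimately show ?thesis by (simp add: add.commute)
qed

definition PP :: "nat \<Rightarrow> rat" where "PP k = (\<Prod>j<q-1. of_nat k + (1 + of_nat j))"
definition Qj :: "nat \<Rightarrow> nat \<Rightarrow> rat" where
  "Qj i k = (\<Prod>j\<in>{..<q-1} - {i}. of_nat k + (1 + of_nat j))"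

lemma Cf_PP: "Cf k = PP k / fact (q - 1)"
proof -
  have e1: "(pochhammer 1 (q - 1 + k) :: rat) = fact (q - 1) * pochhammer (of_nat q) k"
    using pochhammer_product'[of "1::rat" "q - 1" k] ofq by (simp add: pochhammer_fact add.commute)
  have e2: "(pochhammer 1 (k + (q - 1)) :: rat) = fact k * pochhammer (1 + of_nat k) (q - 1)"
    using pochhammer_product'[of "1::rat" k "q - 1"] by (simp add: pochhammer_fact)
  have e3: "pochhammer (1 + of_nat k :: rat) (q - 1) = PP k"
    unfolding pochhammer_prod PP_def atLeast0LessThan by (simp add: algebra_simps)
  have "fact (q - 1) * pochhammer (of_nat q) k = fact k * (PP k :: rat)"
    using e1 e2 e3 by (simp add: add.commute)
  then show ?thesis unfolding Cf_def by (simp add: field_simps)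
qed

lemma PP_Qj: "i < q - 1 \<Longrightarrow> PP k = (of_nat k + 1 + of_nat i) * Qj i k"
  unfolding PP_def Qj_def by (subst prod.remove[of _ i]) (auto simp: add.assoc)

lemma Cf_Qj: "i < q - 1 \<Longrightarrow> Cf k / (of_nat k + 1 + of_nat i) = Qj i k / fact (q - 1)"
proof -
  assume i: "i < q - 1"
  have "(of_nat k + 1 + of_nat i :: rat) \<noteq> 0" by (simp add: add.commute)
  then show ?thesis unfolding Cf_PP PP_Qj[OF i] by simp
qed

lemma isP_PP: "isP (q - 1) PP"
  using isP_prod_lin[of "{..<q-1}" "\<lambda>j. 1 + of_nat j"] unfolding PP_def[abs_def] by simp

lemma isP_Qj: "isP (q - 1) (Qj i)"
proof -
  have "isP (card ({..<q-1} - {i})) (Qj i)"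
    using isP_prod_lin[of "{..<q-1} - {i}" "\<lambda>j. 1 + of_nat j"] unfolding Qj_def[abs_def] by simp
  moreover have "card ({..<q-1} - {i}) \<le> q - 1"
    by (metis card_Diff1_le card_lessThan finite_lessThan card_Diff_singleton_if diff_le_self)
  ultimately show ?thesis using isP_mono by blast
qed

lemma isP_c: "isP d f \<Longrightarrow> isP d (\<lambda>k. f k * c)"
  using isP_mult[OF _ isP_const, of d f c] by simp

lemma isP_Qf: "isP (q - 1) (\<lambda>k. Qj i k / fact (q - 1))"
  using isP_c[OF isP_Qj, of i "1 / fact (q - 1)"] by simp

lemma isP_Cf: "isP (q - 1) Cf"
  using isP_c[OF isP_PP, of "1 / fact (q - 1)"] unfolding Cf_PP[abs_def] by simp

lemma Cf_be0: "Cf k * be0 k = (\<Sum>j<q-1. Qj j k / fact (q - 1)) - Cf k * harm (q - 1)"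
proof -
  have "Cf k * (\<Sum>j<q-1. 1 / (of_nat k + 1 + of_nat j)) = (\<Sum>j<q-1. Cf k / (of_nat k + 1 + of_nat j))"
    by (simp add: sum_distrib_left)
  also have "\<dots> = (\<Sum>j<q-1. Qj j k / fact (q - 1))"
    by (rule sum.cong) (auto simp: Cf_Qj)
  finally show ?thesis unfolding be0_eq by (simp add: right_diff_distrib)
qed

lemma isP_Cbe0: "isP (q - 1) (\<lambda>k. Cf k * be0 k)"
proof -
  have "isP (q - 1) (\<lambda>k. (\<Sum>j<q-1. Qj j k / fact (q - 1)) - Cf k * harm (q - 1))"
    by (intro isP_diff isP_sum isP_c isP_Cf isP_Qf)
  then show ?thesis unfolding Cf_be0 .
qed

lemma Cf_sq: "Cf k ^ 2 * (\<Sum>j<q-1. 1 / (of_nat k + 1 + of_nat j) ^ 2) = (\<Sum>j<q-1. (Qj j k / fact (q - 1)) ^ 2)"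
proof -
  have "Cf k ^ 2 * (\<Sum>j<q-1. 1 / (of_nat k + 1 + of_nat j) ^ 2) = (\<Sum>j<q-1. (Cf k / (of_nat k + 1 + of_nat j)) ^ 2)"
    by (simp add: sum_distrib_left power_divide)
  also have "\<dots> = (\<Sum>j<q-1. (Qj j k / fact (q - 1)) ^ 2)"
    by (rule sum.cong) (auto simp: Cf_Qj)
  finally show ?thesis .
qed

lemma isP_sq: "isP ((q - 1) * 2) (\<lambda>k. \<Sum>j<q-1. (Qj j k / fact (q - 1)) ^ 2)"
  by (intro isP_sum isP_power isP_Qf)

lemma deg1: "(q - 1) * (n - 2) + (q - 1) = (q - 1) * (n - 1)"
proof -
  have "n - 1 = (n - 2) + 1" using n2 by simp
  then show ?thesis by (simp add: distrib_left)
qed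

lemma deg2: "(q - 1) * (n - 3) + (q - 1) * 2 = (q - 1) * (n - 1)"
proof -
  have "n - 1 = (n - 3) + 2" using n2 by simp
  then show ?thesis by (simp add: distrib_left)
qed

lemma sum_b_zero: "isP ((q - 1) * (n - 1)) f \<Longrightarrow> (\<Sum>k=0..m. b k * f k) = 0"
  unfolding b_def atLeast0AtMost using alt_binom_poly[OF _ deg] by simp

lemma Z1: "(\<Sum>k=0..m. X k * be0 k) = 0"
proof -
  have e: "n - 1 = (n - 2) + 1" using n2 by simp
  have eq: "X k * be0 k = b k * (Cf k ^ (n - 2) * (Cf k * be0 k))" for k
  proof -
    have "Cf k ^ (n - 1) = Cf k ^ (n - 2) * Cf k" by (simp only: e power_add power_one_right)
    then show ?thesis unfolding X_def by simp
  qed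
  have "(\<Sum>k=0..m. X k * be0 k) = (\<Sum>k=0..m. b k * (Cf k ^ (n - 2) * (Cf k * be0 k)))"
    by (rule sum.cong) (simp_all only: eq)
  also have "\<dots> = 0"
    by (rule sum_b_zero) (use isP_mult[OF isP_power[OF isP_Cf] isP_Cbe0, of "n - 2"] deg1 in simp)
  finally show ?thesis .
qed

lemma Z2: "(\<Sum>k=0..m. X k * be0 k ^ 2) = 0"
proof -
  have e: "n - 1 = (n - 3) + 2" using n2 by simp
  have eq: "X k * be0 k ^ 2 = b k * (Cf k ^ (n - 3) * (Cf k * be0 k) ^ 2)" for k
  proof -
    have "Cf k ^ (n - 1) = Cf k ^ (n - 3) * Cf k ^ 2" by (simp only: e power_add)
    then show ?thesis unfolding X_def by (simp add: power_mult_distrib)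
  qed
  have "(\<Sum>k=0..m. X k * be0 k ^ 2) = (\<Sum>k=0..m. b k * (Cf k ^ (n - 3) * (Cf k * be0 k) ^ 2))"
    by (rule sum.cong) (simp_all only: eq)
  also have "\<dots> = 0"
    by (rule sum_b_zero) (use isP_mult[OF isP_power[OF isP_Cf] isP_power[OF isP_Cbe0], of "n - 3" 2] deg2 in simp)
  finally show ?thesis .
qed

lemma Z3: "(\<Sum>k=0..m. b k * Cf k ^ (n - 1) * ((\<Sum>j<q-1. 1 / (of_nat k + 1 + of_nat j) ^ 2) + K)) = 0"
proof -
  have e: "n - 1 = (n - 3) + 2" using n2 by simp
  have eq: "b k * Cf k ^ (n - 1) * ((\<Sum>j<q-1. 1 / (of_nat k + 1 + of_nat j) ^ 2) + K)
     = b k * (Cf k ^ (n - 3) * (\<Sum>j<q-1. (Qj j k / fact (q - 1)) ^ 2) + Cf k ^ (n - 1) * K)" for k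
  proof -
    have "Cf k ^ (n - 1) = Cf k ^ (n - 3) * Cf k ^ 2" by (simp only: e power_add)
    then show ?thesis unfolding Cf_sq[symmetric] by (simp add: algebra_simps)
  qed
  have "(\<Sum>k=0..m. b k * Cf k ^ (n - 1) * ((\<Sum>j<q-1. 1 / (of_nat k + 1 + of_nat j) ^ 2) + K))
     = (\<Sum>k=0..m. b k * (Cf k ^ (n - 3) * (\<Sum>j<q-1. (Qj j k / fact (q - 1)) ^ 2) + Cf k ^ (n - 1) * K))"
    by (rule sum.cong) (simp_all only: eq)
  also have "\<dots> = 0"
    by (rule sum_b_zero)
       (use isP_add[OF isP_mult[OF isP_power[OF isP_Cf] isP_sq, of "n - 3", unfolded deg2] isP_c[OF isP_power[OF isP_Cf], of "n - 1" K]] in simp)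
  finally show ?thesis .
qed


lemma ZH2: "a < p \<Longrightarrow> H2 a \<in> Zp_loc p"
  unfolding H2_def
  by (intro Zp_sum[OF pr]) (use Zp_power[OF pr Zinv_nat, of _ 2] in \<open>auto simp: power_one_over\<close>)

lemma ZSj: "k \<le> m \<Longrightarrow> (\<Sum>j<q-1. 1 / (of_nat k + 1 + of_nat j :: rat) ^ 2) + (H2 m - H2 (q - 1)) \<in> Zp_loc p"
proof -
  assume k: "k \<le> m"
  have s1: "(\<Sum>j<q-1. 1 / (of_nat k + 1 + of_nat j :: rat) ^ 2) \<in> Zp_loc p"
  proof (intro Zp_sum[OF pr])
    fix j assume "j \<in> {..<q-1}"
    then have "j < q - 1" by simp
    then have "0 < k + 1 + j" "k + 1 + j < p" using k pm by linarith+
    from Zp_power[OF pr Zinv_nat[OF this], of 2]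
    have "(1 / of_nat (k + 1 + j) :: rat) ^ 2 \<in> Zp_loc p" .
    then show "1 / (of_nat k + 1 + of_nat j :: rat) ^ 2 \<in> Zp_loc p" by (simp add: power_one_over add_ac)
  qed
  have "m < p" "q - 1 < p" using pm q0 by auto
  then show ?thesis using Zp_add(1)[OF pr s1 Zp_add(3)[OF pr ZH2 ZH2]] by blast
qed

lemma inv_sq_cg: "i < m \<Longrightarrow> cg p 1 (1 / (of_nat q + of_nat i) ^ 2) (1 / (of_nat (m - i)) ^ 2)"
proof -
  assume i: "i < m"
  have "(of_nat q + of_nat i) - (- of_nat (m - i)) = (of_nat p :: rat)"
    using i pm by (simp add: of_nat_diff)
  then have d: "cg p 1 (of_nat q + of_nat i) (- of_nat (m - i) :: rat)"
    unfolding cg_def using pd_p[OF pr] by simp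
  have z1: "1 / (of_nat q + of_nat i :: rat) \<in> Zp_loc p" using Zinv_qi[OF i] .
  have "0 < m - i" "m - i < p" using i pm q0 by auto
  from Zinv_nat[OF this] have z2': "1 / (of_nat (m - i) :: rat) \<in> Zp_loc p" .
  have z2: "1 / (- of_nat (m - i) :: rat) \<in> Zp_loc p" using Zp_add(4)[OF pr z2' z2'] by simp
  have c: "cg p 1 (1 / (of_nat q + of_nat i)) (1 / (- of_nat (m - i)) :: rat)"
    by (rule cg_inv[OF pr d z1 z2]) (use q0 i in auto)
  have "cg p 1 ((1 / (of_nat q + of_nat i)) ^ 2) ((1 / (- of_nat (m - i))) ^ 2 :: rat)"
    by (rule cg_power[OF pr c z2])
  then show ?thesis by (simp add: power_one_over)
qed

lemma gam_rev: "k \<le> m \<Longrightarrow> cg p 1 (gam (m - k)) (H2 m - H2 k)"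
proof -
  assume k: "k \<le> m"
  have c: "cg p 1 (gam (m - k)) (\<Sum>i<m-k. 1 / (of_nat (m - i)) ^ 2)"
    unfolding gam_def by (rule cg_sum[OF pr]) (use inv_sq_cg in auto)
  have "H2 m = H2 (k + (m - k))" using k by simp
  also have "\<dots> = H2 k + (\<Sum>i<m-k. 1 / (of_nat k + 1 + of_nat i) ^ 2)" by (rule H2_add)
  also have "(\<Sum>i<m-k. 1 / (of_nat k + 1 + of_nat i :: rat) ^ 2)
      = (\<Sum>i<m-k. 1 / (of_nat k + 1 + of_nat (m - k - Suc i)) ^ 2)"
    by (rule sum.nat_diff_reindex[symmetric])
  also have "\<dots> = (\<Sum>i<m-k. 1 / (of_nat (m - i)) ^ 2)"
  proof (rule sum.cong[OF refl])
    fix i assume "i \<in> {..<m-k}"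
    then have "k + 1 + (m - k - Suc i) = m - i" using k by auto
    then have "(of_nat k + 1 + of_nat (m - k - Suc i) :: rat) = of_nat (m - i)"
      by (metis of_nat_add of_nat_1)
    then show "1 / (of_nat k + 1 + of_nat (m - k - Suc i)) ^ 2 = 1 / (of_nat (m - i) :: rat) ^ 2" by simp
  qed
  finally have "(\<Sum>i<m-k. 1 / (of_nat (m - i) :: rat) ^ 2) = H2 m - H2 k" by simp
  then show ?thesis using c by simp
qed

lemma gam_refl: "k \<le> m \<Longrightarrow> cg p 1 (gam k + gam (m - k))
   ((\<Sum>j<q-1. 1 / (of_nat k + 1 + of_nat j) ^ 2) + (H2 m - H2 (q - 1)))"
proof -
  assume k: "k \<le> m"
  have "cg p 1 (gam k + gam (m - k)) (gam k + (H2 m - H2 k))"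
    by (rule cg_add[OF pr cg_refl[OF pr] gam_rev[OF k]])
  moreover have "gam k + (H2 m - H2 k) = (\<Sum>j<q-1. 1 / (of_nat k + 1 + of_nat j) ^ 2) + (H2 m - H2 (q - 1))"
    unfolding gam_eq by simp
  ultimately show ?thesis by simp
qed

lemma b_refl: "k \<le> m \<Longrightarrow> b (m - k) ^ n = b k ^ n"
proof -
  assume k: "k \<le> m"
  have e: "(m - k) * n + k * n = m * n" using k by (simp add: add_mult_distrib[symmetric])
  have par2: "even ((m - k) * n) \<longleftrightarrow> even (k * n)"
    using mn_even unfolding e[symmetric] by auto
  have "b (m - k) ^ n = (-1) ^ ((m - k) * n) * of_nat (m choose k) ^ n"
    unfolding b_def using binomial_symmetric[OF k]
    by (simp add: power_mult_distrib power_mult[symmetric])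
  also have "\<dots> = (-1) ^ (k * n) * of_nat (m choose k) ^ n"
    using par2 by (simp add: minus_one_power_iff)
  also have "\<dots> = b k ^ n" unfolding b_def by (simp add: power_mult_distrib power_mult)
  finally show ?thesis .
qed

lemma bn_X: "k \<le> m \<Longrightarrow> cg p 1 (X k) (b k ^ n)"
proof -
  assume k: "k \<le> m"
  have "cg p 1 (Cf k ^ (n - 1)) (b k ^ (n - 1))" by (rule cg_power[OF pr Cf_b[OF k] Zb])
  then have "cg p 1 (b k * Cf k ^ (n - 1)) (b k * b k ^ (n - 1))"
    by (rule cg_mult[OF pr cg_refl[OF pr] _ Zb Zp_power[OF pr Zb]])
  moreover have "b k * b k ^ (n - 1) = b k ^ n" using n2 by (cases n) auto
  ultimately show ?thesis unfolding X_def by simp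
qed

lemma III: "pd p 1 (\<Sum>k=0..m. X k * gam k)"
proof -
  define K where "K = H2 m - H2 (q - 1)"
  define Sj where "Sj k = (\<Sum>j<q-1. 1 / (of_nat k + 1 + of_nat j :: rat) ^ 2) + K" for k
  define Y where "Y = (\<Sum>k=0..m. X k * gam k)"
  define W where "W = (\<Sum>k=0..m. b k ^ n * gam k)"
  have ZS: "k \<le> m \<Longrightarrow> Sj k \<in> Zp_loc p" for k unfolding Sj_def K_def by (rule ZSj)
  have c1k: "cg p 1 (X k * gam k) (b k ^ n * gam k)" if k: "k \<le> m" for k
    by (rule cg_mult[OF pr bn_X[OF k] cg_refl[OF pr] ZX[OF k] Zgam[OF k]])
  have c1: "cg p 1 Y W" unfolding Y_def W_def
    by (rule cg_sum[OF pr]) (use c1k in simp)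
  have "W = (\<Sum>k=0..m. b (m + 0 - k) ^ n * gam (m + 0 - k))"
    unfolding W_def by (rule sum.atLeastAtMost_rev)
  also have "\<dots> = (\<Sum>k=0..m. b k ^ n * gam (m - k))"
    by (rule sum.cong[OF refl]) (simp add: b_refl)
  finally have w: "2 * W = (\<Sum>k=0..m. b k ^ n * (gam k + gam (m - k)))"
    unfolding mult_2 by (subst (1) W_def) (simp add: distrib_left sum.distrib)
  have c2k: "cg p 1 (b k ^ n * (gam k + gam (m - k))) (b k ^ n * Sj k)" if k: "k \<le> m" for k
  proof (rule cg_mult[OF pr cg_refl[OF pr] _ Zp_power[OF pr Zb] ZS[OF k]])
    show "cg p 1 (gam k + gam (m - k)) (Sj k)" unfolding Sj_def K_def by (rule gam_refl[OF k])
  qed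
  have c2: "cg p 1 (\<Sum>k=0..m. b k ^ n * (gam k + gam (m - k))) (\<Sum>k=0..m. b k ^ n * Sj k)"
    by (rule cg_sum[OF pr]) (use c2k in simp)
  have c3k: "cg p 1 (b k ^ n * Sj k) (X k * Sj k)" if k: "k \<le> m" for k
    by (rule cg_mult[OF pr cg_sym[OF pr bn_X[OF k]] cg_refl[OF pr] Zp_power[OF pr Zb] ZS[OF k]])
  have c3: "cg p 1 (\<Sum>k=0..m. b k ^ n * Sj k) (\<Sum>k=0..m. X k * Sj k)"
    by (rule cg_sum[OF pr]) (use c3k in simp)
  have z: "(\<Sum>k=0..m. X k * Sj k) = 0"
  proof -
    have "(\<Sum>k=0..m. X k * Sj k) = (\<Sum>k=0..m. b k * Cf k ^ (n - 1) * ((\<Sum>j<q-1. 1 / (of_nat k + 1 + of_nat j) ^ 2) + K))"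
      unfolding X_def Sj_def ..
    then show ?thesis using Z3[of K] by simp
  qed
  have c4: "cg p 1 (2 * W) 0"
    unfolding w using cg_trans[OF pr c2 c3] unfolding z .
  have "cg p 1 (2 * Y) (2 * W)"
  proof -
    have "2 * Y - 2 * W = (Y - W) * 2" by (simp add: algebra_simps)
    moreover have "pd p 1 ((Y - W) * 2)"
      using pd_multZ[OF pr _ Zint[of 2], of 1 "Y - W"] c1 unfolding cg_def by (simp only: of_int_numeral)
    ultimately show ?thesis unfolding cg_def by (simp only:)
  qed
  then have "cg p 1 (2 * Y) 0" using cg_trans[OF pr _ c4] by blast
  then have "pd p 1 (of_int 2 * Y)" unfolding cg_def by simp
  moreover have "\<not> int p dvd 2"
  proof
    assume "int p dvd 2"
    then have "int p dvd int 2" by simp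
    then have "p dvd 2" by (simp only: int_dvd_int_iff)
    then show False using pn n2 by (auto dest: dvd_imp_le)
  qed
  ultimately show ?thesis unfolding Y_def by (rule pd_cancel[OF pr])
qed



lemma main:
  shows "rat_cong (\<Sum>k=0..p-q. (pochhammer (of_nat q - of_nat p / of_nat n) k) ^ n / (pochhammer 1 k) ^ n *
            ((\<Sum>i<k. 1 / (of_nat q + of_nat i - of_nat p / of_nat n)) - harm k)) 0 p 2
       \<and> rat_cong (\<Sum>k=0..p-q. (pochhammer (of_nat q - of_nat p / of_nat n) k) ^ n / (pochhammer 1 k) ^ n *
            ((\<Sum>i<k. 1 / (of_nat q + of_nat i - of_nat p / of_nat n)) - harm k) ^ 2) 0 p 1"
proof -
  have eS1: "(\<Sum>k=0..p-q. (pochhammer (of_nat q - of_nat p / of_nat n) k) ^ n / (pochhammer 1 k) ^ n *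
            ((\<Sum>i<k. 1 / (of_nat q + of_nat i - of_nat p / of_nat n)) - harm k)) = (\<Sum>k=0..m. A k * be k)"
    unfolding A_def be_def m_def ..
  have eS2: "(\<Sum>k=0..p-q. (pochhammer (of_nat q - of_nat p / of_nat n) k) ^ n / (pochhammer 1 k) ^ n *
            ((\<Sum>i<k. 1 / (of_nat q + of_nat i - of_nat p / of_nat n)) - harm k) ^ 2) = (\<Sum>k=0..m. A k * be k ^ 2)"
    unfolding A_def be_def m_def ..
  have rc: "pd p e x \<Longrightarrow> rat_cong x 0 p e" for e x unfolding rat_cong_def pd_def by simp
  have Zbt: "k \<le> m \<Longrightarrow> be0 k + t * gam k \<in> Zp_loc p" for k
    using Zp_add(1)[OF pr Zbe0 Zp_add(2)[OF pr Zt Zgam]] by blast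
  have c1k: "cg p 2 (A k * be k) (X k * (be0 k + t * gam k))" if k: "k \<le> m" for k
    by (rule cg_mult[OF pr A_X[OF k] be_cg[OF k] ZA[OF k] Zbt[OF k]])
  have c1: "cg p 2 (\<Sum>k=0..m. A k * be k) (\<Sum>k=0..m. X k * (be0 k + t * gam k))"
    by (rule cg_sum[OF pr]) (use c1k in simp)
  have "(\<Sum>k=0..m. X k * (be0 k + t * gam k)) = (\<Sum>k=0..m. X k * be0 k) + t * (\<Sum>k=0..m. X k * gam k)"
    by (simp add: distrib_left sum.distrib sum_distrib_left mult_ac)
  also have "\<dots> = t * (\<Sum>k=0..m. X k * gam k)" using Z1 by simp
  finally have e1: "(\<Sum>k=0..m. X k * (be0 k + t * gam k)) = t * (\<Sum>k=0..m. X k * gam k)" .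
  have p2: "pd p 2 (t * (\<Sum>k=0..m. X k * gam k))"
    using pd_mult[OF pr pd_t III] by (simp only: one_add_one)
  have "pd p 2 ((\<Sum>k=0..m. A k * be k) - t * (\<Sum>k=0..m. X k * gam k) + t * (\<Sum>k=0..m. X k * gam k))"
    using pd_add[OF pr _ p2] c1 unfolding cg_def e1 by blast
  then have S1: "pd p 2 (\<Sum>k=0..m. A k * be k)" by simp
  have bb: "cg p 1 (be k) (be0 k)" if k: "k \<le> m" for k
  proof -
    have "cg p 1 (be k) (be0 k + t * gam k)" using cg_mono[OF pr be_cg[OF k]] by simp
    moreover have "cg p 1 (be0 k + t * gam k) (be0 k)"
      unfolding cg_def using pd_multZ[OF pr pd_t Zgam[OF k]] by simp
    ultimately show ?thesis using cg_trans[OF pr] by blast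
  qed
  have c2k: "cg p 1 (A k * be k ^ 2) (X k * be0 k ^ 2)" if k: "k \<le> m" for k
    using cg_mult[OF pr cg_mono[OF pr A_X[OF k], of 1] cg_power[OF pr bb[OF k] Zbe0[OF k], of 2] ZA[OF k]
      Zp_power[OF pr Zbe0[OF k]]] by simp
  have "cg p 1 (\<Sum>k=0..m. A k * be k ^ 2) (\<Sum>k=0..m. X k * be0 k ^ 2)"
    by (rule cg_sum[OF pr]) (use c2k in simp)
  then have S2: "pd p 1 (\<Sum>k=0..m. A k * be k ^ 2)" unfolding cg_def Z2 by simp
  show ?thesis unfolding eS1 eS2 using rc[OF S1] rc[OF S2] by simp
qed

end

theorem lemma3p2:
  fixes n q p :: nat
  assumes "n > 2" and "q > 0" and "even n \<or> odd q"
    and "prime p" and "p > max n ((q - 1) * n + 1)"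
  shows "rat_cong (\<Sum>k=0..p-q. (pochhammer (of_nat q - of_nat p / of_nat n) k) ^ n / (pochhammer 1 k) ^ n *
            ((\<Sum>i<k. 1 / (of_nat q + of_nat i - of_nat p / of_nat n)) - harm k)) 0 p 2
       \<and> rat_cong (\<Sum>k=0..p-q. (pochhammer (of_nat q - of_nat p / of_nat n) k) ^ n / (pochhammer 1 k) ^ n *
            ((\<Sum>i<k. 1 / (of_nat q + of_nat i - of_nat p / of_nat n)) - harm k) ^ 2) 0 p 1"
proof -
  interpret L n q p by (rule L.intro) (use assms in auto)
  show ?thesis by (rule main)
qed

end
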